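(* Let $G$ be a connected graph with $n$ vertices and matching number $k$, where $2\le k\le\lfloor n/2\rfloor$. If $4\le n\le 6$ and $k=\lfloor n/2\rfloor$, then $\sigma_2(G)\ge\binom n2$, with equality if and only if $G=K_n$. Otherwise, $\sigma_2(G)\ge 2n+4k-6$, with equality if and only if $G=K_1\vee\big((k-1)K_2+\overline{K}_{n+1-2k}\big)$.
   Context: All graphs are finite, simple, undirected. For a connected graph $G$ and $u\in V(G)$, $\varepsilon_G(u)=\max_v d_G(u,v)$, and $\sigma_2(G)=\sum_{uv\in E(G)}\varepsilon_G(u)\varepsilon_G(v)$. The matching number is the maximum number of pairwise disjoint edges. $K_r$ is the complete graph, $\overline{K}_r$ the edgeless graph on $r$ vertices, $(k-1)K_2$ is a disjoint union of $k-1$ edges; $G+H$ is the disjoint union and $G\vee H$ (the join) is obtained from $G+H$ by adding all edges between $V(G)$ and $V(H)$. *)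

theory Defs
  imports Main
begin

definition simple_graph :: "'a set \<Rightarrow> ('a \<Rightarrow> 'a \<Rightarrow> bool) \<Rightarrow> bool" where
  "simple_graph V E \<longleftrightarrow> finite V \<and>
     (\<forall>u v. E u v \<longrightarrow> u \<in> V \<and> v \<in> V \<and> u \<noteq> v \<and> E v u)"

definition connected_graph :: "'a set \<Rightarrow> ('a \<Rightarrow> 'a \<Rightarrow> bool) \<Rightarrow> bool" where
  "connected_graph V E \<longleftrightarrow> V \<noteq> {} \<and> (\<forall>u\<in>V. \<forall>v\<in>V. \<exists>m. (E ^^ m) u v)"

definition dist :: "('a \<Rightarrow> 'a \<Rightarrow> bool) \<Rightarrow> 'a \<Rightarrow> 'a \<Rightarrow> nat" where
  "dist E u v = (LEAST m. (E ^^ m) u v)"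

definition ecc :: "'a set \<Rightarrow> ('a \<Rightarrow> 'a \<Rightarrow> bool) \<Rightarrow> 'a \<Rightarrow> nat" where
  "ecc V E u = Max (dist E u ` V)"

definition edges :: "('a \<Rightarrow> 'a \<Rightarrow> bool) \<Rightarrow> 'a set set" where
  "edges E = {{u, v} | u v. E u v}"

definition sigma2 :: "'a set \<Rightarrow> ('a \<Rightarrow> 'a \<Rightarrow> bool) \<Rightarrow> nat" where
  "sigma2 V E = (\<Sum>e\<in>edges E. \<Prod>x\<in>e. ecc V E x)"

definition is_matching :: "('a \<Rightarrow> 'a \<Rightarrow> bool) \<Rightarrow> 'a set set \<Rightarrow> bool" where
  "is_matching E M \<longleftrightarrow> M \<subseteq> edges E \<and> (\<forall>e1\<in>M. \<forall>e2\<in>M. e1 \<noteq> e2 \<longrightarrow> e1 \<inter> e2 = {})"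

definition matching_number :: "('a \<Rightarrow> 'a \<Rightarrow> bool) \<Rightarrow> nat" where
  "matching_number E = Max {card M | M. is_matching E M}"

definition graph_iso :: "'a set \<Rightarrow> ('a \<Rightarrow> 'a \<Rightarrow> bool) \<Rightarrow> 'b set \<Rightarrow> ('b \<Rightarrow> 'b \<Rightarrow> bool) \<Rightarrow> bool" where
  "graph_iso V E W F \<longleftrightarrow> (\<exists>f. bij_betw f V W \<and> (\<forall>u\<in>V. \<forall>v\<in>V. E u v \<longleftrightarrow> F (f u) (f v)))"

definition complete_adj :: "nat \<Rightarrow> nat \<Rightarrow> nat \<Rightarrow> bool" where
  "complete_adj n u v \<longleftrightarrow> u < n \<and> v < n \<and> u \<noteq> v"

text \<open>K_1 join ((k-1)K_2 + edgeless graph on n+1-2k vertices), on vertex set {0..<n}: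
  vertex 0 is the K_1; vertices 2i-1, 2i (1 <= i <= k-1) form the copies of K_2;
  vertices 2k-1, ..., n-1 are the isolated vertices of the edgeless part.\<close>
definition join_adj :: "nat \<Rightarrow> nat \<Rightarrow> nat \<Rightarrow> nat \<Rightarrow> bool" where
  "join_adj n k u v \<longleftrightarrow> u < n \<and> v < n \<and> u \<noteq> v \<and>
     (u = 0 \<or> v = 0 \<or>
      (1 \<le> u \<and> u \<le> 2*k - 2 \<and> 1 \<le> v \<and> v \<le> 2*k - 2 \<and> (u + 1) div 2 = (v + 1) div 2))"

end

theory Submission
  imports Defs
begin
lemma La: fixes d k n :: int assumes "d \<ge> 2" "d \<le> k" "2*k \<le> n" "n \<ge> 6"
  shows "d*(d-1) + 4*d*(n-d) + 8*(k-d) > 4*n + 8*k - 12"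
proof -
  have "(d-1)*(4*n-3*d-12) > 0" using assms by (intro mult_pos_pos) linarith+
  then show ?thesis by (simp add: algebra_simps)
qed

lemma Lb: fixes d r :: int assumes "d \<ge> 0" "r \<ge> 0" "r \<le> d + 1"
  shows "d*(d-1) + 4*d*r \<ge> (d+r)*(d+r-1)"
proof -
  have e: "d*(d-1) + 4*d*r - (d+r)*(d+r-1) = r*(2*d-r+1)" by (simp add: algebra_simps)
  have "r*(2*d-r+1) \<ge> 0" using assms by simp
  then show "d*(d-1) + 4*d*r \<ge> (d+r)*(d+r-1)" using e by linarith
qed

lemma Lc: fixes n k :: int assumes "n \<ge> 7" "2*k \<le> n"
  shows "n*(n-1) > 4*n + 8*k - 12"
proof (cases "n \<ge> 8")
  case True
  have "(n-8)*(n-1) \<ge> 0" using True by simp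
  then show ?thesis using assms by (simp add: algebra_simps)
next
  case False
  then have "n = 7" using assms by simp
  then show ?thesis using assms by presburger
qed

lemma arith_main:
 fixes x n k d r S :: int
 assumes "0 \<le> d" "0 \<le> r" "0 \<le> S" "n = d + r" "2 \<le> k" "2*k \<le> n"
  "d = 0 \<Longrightarrow> x \<ge> 8*(n-1)"
  "d \<ge> 1 \<Longrightarrow> x = d*(d-1) + 4*d*r + 4*S"
  "2*(k-d) \<le> S"
  "k+1 \<le> d \<Longrightarrow> n < 2*(k+1)"
 shows "4 \<le> n \<and> n \<le> 6 \<and> 2*k+1 \<ge> n \<Longrightarrow> x \<ge> n*(n-1) \<and> (x = n*(n-1) \<longrightarrow> d = n)"
 and  "\<not>(4 \<le> n \<and> n \<le> 6 \<and> 2*k+1 \<ge> n) \<Longrightarrow> x \<ge> 2*(2*n+4*k-6) \<and> (x = 2*(2*n+4*k-6) \<longrightarrow> d = 1 \<and> S = 2*(k-1))"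
proof -
  assume c1: "4 \<le> n \<and> n \<le> 6 \<and> 2*k+1 \<ge> n"
  have dd: "d = 0 \<or> d = 1 \<or> d = 2 \<or> d = 3 \<or> d = 4 \<or> d = 5 \<or> d = 6" using c1 assms by arith
  have nn: "(n = 4 \<and> k = 2) \<or> (n = 5 \<and> k = 2) \<or> (n = 6 \<and> k = 3)" using c1 assms by arith
  show "x \<ge> n*(n-1) \<and> (x = n*(n-1) \<longrightarrow> d = n)"
  proof (cases "d = 0")
    case True
    then have "x \<ge> 8*(n-1)" using assms by simp
    then show ?thesis using nn True by auto
  next
    case False
    then have xe: "x = d*(d-1) + 4*d*(n-d) + 4*S" using assms by simp
    from dd False nn show ?thesis using assms(2,3,4,9,10) unfolding xe by auto
  qed
next
  assume c2: "\<not>(4 \<le> n \<and> n \<le> 6 \<and> 2*k+1 \<ge> n)"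
  then have n6: "n \<ge> 6" using assms by arith
  show "x \<ge> 2*(2*n+4*k-6) \<and> (x = 2*(2*n+4*k-6) \<longrightarrow> d = 1 \<and> S = 2*(k-1))"
  proof (cases "d = 0")
    case True
    then show ?thesis using assms by simp
  next
    case False
    then have xe: "x = d*(d-1) + 4*d*(n-d) + 4*S" using assms by simp
    consider "d = 1" | "2 \<le> d" "d \<le> k" | "k+1 \<le> d" using False assms by arith
    then show ?thesis
    proof cases
      case 1 then show ?thesis using xe assms by simp
    next
      case 2
      have "d*(d-1) + 4*d*(n-d) + 8*(k-d) > 4*n + 8*k - 12" using La[OF 2 assms(6) n6] .
      moreover obtain P where P: "P = d*(d-1) + 4*d*(n-d)" by simp
      ultimately have "4*n + 8*k - 12 < P + 8*(k-d)" "x = P + 4*S" using xe by simp_all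
      then have "x > 2*(2*n+4*k-6)" using assms(9) 2 by arith
      then show ?thesis by simp
    next
      case 3
      have n2: "n < 2*(k+1)" using assms 3 by simp
      then have n7: "n \<ge> 7" using c2 assms by arith
      have "r \<le> d + 1" using assms 3 n2 by arith
      then have "d*(d-1) + 4*d*r \<ge> (d+r)*(d+r-1)" using Lb[of d r] assms by blast
      moreover have "n*(n-1) > 4*n + 8*k - 12" using Lc[OF n7 assms(6)] .
      ultimately have "x > 2*(2*n+4*k-6)" using xe assms by (simp add: algebra_simps)
      then show ?thesis by simp
    qed
  qed
qed




lemma div2_iff: "(x+1) div 2 = (c::nat) \<longleftrightarrow> 2*c \<le> x+1 \<and> x+1 < 2*c+2"
proof -
  have a: "c \<le> (x+1) div 2 \<longleftrightarrow> c*2 \<le> x+1" by (rule less_eq_div_iff_mult_less_eq) simp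
  have b: "c+1 \<le> (x+1) div 2 \<longleftrightarrow> (c+1)*2 \<le> x+1" by (rule less_eq_div_iff_mult_less_eq) simp
  show ?thesis using a b by linarith
qed
lemma partner: assumes "1 \<le> (i::nat)" "i \<le> m" "even m"
  shows "(1 \<le> j \<and> j \<noteq> i \<and> j \<le> m \<and> (i + 1) div 2 = (j + 1) div 2) \<longleftrightarrow> j = (if odd i then i+1 else i-1)"
proof -
  define c where "c = (i+1) div 2"
  have ci: "2*c \<le> i+1" "i+1 < 2*c+2" using div2_iff[of i c] c_def by simp_all
  have cj: "c = (j+1) div 2 \<longleftrightarrow> 2*c \<le> j+1 \<and> j+1 < 2*c+2" using div2_iff[of j c] by auto
  have "i + 1 = 2*c \<or> i + 1 = 2*c+1" using ci by linarith
  then show ?thesis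
  proof
    assume h: "i + 1 = 2*c"
    then have "even (i+1)" by simp
    then have oi: "odd i" by simp
    then have "i \<noteq> m" using assms(3) by auto
    then have K: "i + 1 \<le> m" using assms(2) by simp
    show ?thesis unfolding c_def[symmetric] cj using oi h K assms(1) by auto
  next
    assume h: "i + 1 = 2*c+1"
    then have i: "i = 2*c" by simp
    then have ei: "even i" by simp
    have c1: "c \<ge> 1" using i assms(1) by simp
    have "(1 \<le> j \<and> j \<noteq> i \<and> j \<le> m \<and> 2*c \<le> j+1 \<and> j+1 < 2*c+2) \<longleftrightarrow> j + 1 = 2*c"
      using i c1 assms(2) by (intro iffI conjI; (elim conjE)?; linarith)
    also have "\<dots> \<longleftrightarrow> j = i - 1" using i c1 by auto
    finally show ?thesis unfolding c_def[symmetric] cj using ei by simp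
  qed
qed
lemma par_eq: assumes "1 \<le> (i::nat)" "1 \<le> j" "(i-1) div 2 = (j-1) div 2" "odd i = odd j" shows "i = j"
proof -
  obtain i' j' where ij: "i = Suc i'" "j = Suc j'" using assms by (metis Suc_le_D One_nat_def)
  then have "i' div 2 = j' div 2" "i' mod 2 = j' mod 2" using assms by (auto simp: odd_iff_mod_2_eq_one)
  then have "i' = j'" by (metis div_mult_mod_eq)
  then show ?thesis using ij by simp
qed

lemma gci: assumes "1 \<le> (j::nat)" "j \<le> 2*k-2" shows "(j-1) div 2 < k - 1"
proof -
  have "j - 1 < (k-1)*2" using assms by simp
  then show ?thesis by (rule less_mult_imp_div_less)
qed

lemma even_2k: "even (2*k-2::nat)"
proof -
  have "2*k-2 = 2*(k-1)" by simp
  then show ?thesis by simp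
qed

locale sg =
  fixes V :: "'a set" and E :: "'a \<Rightarrow> 'a \<Rightarrow> bool"
  assumes simple: "simple_graph V E" and conn: "connected_graph V E"
begin

lemma finV: "finite V" using simple by (simp add: simple_graph_def)
lemma E_V: "E u v \<Longrightarrow> u \<in> V \<and> v \<in> V" using simple by (simp add: simple_graph_def)
lemma E_irr: "E u v \<Longrightarrow> u \<noteq> v" using simple by (simp add: simple_graph_def)
lemma E_sym: "E u v \<Longrightarrow> E v u" using simple by (simp add: simple_graph_def)
lemma Vne: "V \<noteq> {}" using conn by (simp add: connected_graph_def)

lemma reach: "u\<in>V \<Longrightarrow> v\<in>V \<Longrightarrow> (E ^^ dist E u v) u v"
  unfolding dist_def using conn by (auto simp: connected_graph_def intro: LeastI_ex)

lemma dist_le: "(E^^m) u v \<Longrightarrow> dist E u v \<le> m"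
  unfolding dist_def by (rule Least_le)

lemma dist_0: "u\<in>V \<Longrightarrow> v\<in>V \<Longrightarrow> dist E u v = 0 \<longleftrightarrow> u = v"
proof
  assume "u\<in>V" "v\<in>V" "dist E u v = 0"
  then show "u = v" using reach[of u v] by simp
next
  assume "u = v" then show "dist E u v = 0" using dist_le[of 0 u v] by simp
qed

lemma dist_1: "u\<in>V \<Longrightarrow> v\<in>V \<Longrightarrow> dist E u v = 1 \<Longrightarrow> E u v"
  using reach[of u v] by (simp add: relcompp_apply)

lemma dist_E: "E u v \<Longrightarrow> dist E u v \<le> 1"
  using dist_le[of 1 u v] by (simp add: relcompp_apply)

lemma dist_2: "E u x \<Longrightarrow> E x w \<Longrightarrow> dist E u w \<le> 2"
proof -
  assume "E u x" "E x w"
  then have "(E^^2) u w" by (auto simp: numeral_2_eq_2 relcompp_apply)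
  then show ?thesis by (rule dist_le)
qed

lemma dist_ge2: "u\<in>V \<Longrightarrow> v\<in>V \<Longrightarrow> u \<noteq> v \<Longrightarrow> \<not> E u v \<Longrightarrow> dist E u v \<ge> 2"
  using dist_0[of u v] dist_1[of u v] by linarith

abbreviation "ecc' \<equiv> ecc V E"

lemma ecc_ge: "w \<in> V \<Longrightarrow> dist E u w \<le> ecc' u"
  unfolding ecc_def using finV by (auto intro: Max_ge)

lemma ecc_le: "(\<And>w. w\<in>V \<Longrightarrow> dist E u w \<le> b) \<Longrightarrow> ecc' u \<le> b"
  unfolding ecc_def using finV Vne by (auto)

definition "Dm = {u\<in>V. \<forall>w\<in>V. w \<noteq> u \<longrightarrow> E u w}"

lemma ecc_D: assumes "u \<in> Dm" "card V \<ge> 2" shows "ecc' u = 1"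
proof -
  have uV: "u \<in> V" using assms by (simp add: Dm_def)
  have "ecc' u \<le> 1"
  proof (rule ecc_le)
    fix w assume "w\<in>V" then show "dist E u w \<le> 1"
      using assms dist_E[of u w] dist_0[of u w] uV by (cases "w = u") (auto simp: Dm_def)
  qed
  moreover obtain w where "w \<in> V" "w \<noteq> u"
  proof -
    have "V - {u} \<noteq> {}"
    proof
      assume "V - {u} = {}" then have "V \<subseteq> {u}" by blast
      then have "card V \<le> 1" using card_mono[of "{u}" V] by simp
      with assms(2) show False by simp
    qed
    then show ?thesis using that by blast
  qed
  then have "dist E u w \<ge> 1" using dist_0[of u w] uV by simp
  then have "ecc' u \<ge> 1" using ecc_ge[OF \<open>w\<in>V\<close>, of u] by simp
  ultimately show ?thesis by simp
qed

lemma ecc_nD: assumes "u \<in> V - Dm" shows "ecc' u \<ge> 2"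
proof -
  obtain w where "w\<in>V" "w \<noteq> u" "\<not> E u w" using assms by (auto simp: Dm_def)
  then show ?thesis using dist_ge2[of u w] ecc_ge[of w u] assms by force
qed

lemma ecc_le2: assumes "Dm \<noteq> {}" "u \<in> V" shows "ecc' u \<le> 2"
proof (rule ecc_le)
  fix w assume wV: "w \<in> V"
  obtain x where x: "x \<in> Dm" using assms by blast
  show "dist E u w \<le> 2"
  proof (cases "u = w")
    case True then show ?thesis using dist_0[of u w] wV by simp
  next
    case uw: False
    show ?thesis
    proof (cases "u = x")
      case True then show ?thesis using x uw wV dist_E[of u w] by (auto simp: Dm_def)
    next
      case ux: False
      then have "E x u" using x assms by (auto simp: Dm_def)
      then have xu: "E u x" by (rule E_sym)
      show ?thesis
      proof (cases "w = x")
        case True then show ?thesis using dist_E[OF xu] by simp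
      next
        case False
        then have "E x w" using x wV by (auto simp: Dm_def)
        then show ?thesis using dist_2[OF xu] by simp
      qed
    qed
  qed
qed

definition "Nb u = {v\<in>V. E u v}"
definition "Rm = V - Dm"

lemma DV: "Dm \<subseteq> V" by (auto simp: Dm_def)
lemma sum_split: "sum g V = sum g Dm + sum g Rm"
  using sum.subset_diff[OF DV finV, of g] by (simp add: Rm_def add.commute)

lemma finNb: "finite (Nb u)" using finV by (simp add: Nb_def)
lemma finE: "finite (edges E)"
proof -
  have "edges E \<subseteq> Pow V" using E_V by (auto simp: edges_def)
  then show ?thesis using finV by (meson finite_Pow_iff finite_subset)
qed

lemma sigma2_double: "2 * sigma2 V E = (\<Sum>u\<in>V. \<Sum>v\<in>Nb u. ecc' u * ecc' v)"
proof -
  let ?S = "Sigma V Nb"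
  let ?g = "\<lambda>(u,v). ecc' u * ecc' v"
  let ?f = "\<lambda>(u::'a,v::'a). {u,v}"
  have fS: "finite ?S" using finV finNb by auto
  have img: "?f ` ?S \<subseteq> edges E" by (force simp: Nb_def edges_def)
  have "(\<Sum>u\<in>V. \<Sum>v\<in>Nb u. ecc' u * ecc' v) = sum ?g ?S"
    using sum.Sigma[OF finV, of Nb "\<lambda>u v. ecc' u * ecc' v"] finNb by simp
  also have "\<dots> = (\<Sum>e\<in>edges E. sum ?g {x. x \<in> ?S \<and> ?f x = e})"
    using sum.group[OF fS finE img, of ?g] by simp
  also have "\<dots> = (\<Sum>e\<in>edges E. 2 * prod ecc' e)"
  proof (rule sum.cong[OF refl])
    fix e assume "e \<in> edges E"
    then obtain a b where e: "e = {a,b}" "E a b" by (auto simp: edges_def)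
    then have ab: "a \<noteq> b" by (simp add: E_irr)
    have "{x. x \<in> ?S \<and> ?f x = e} = {(a,b),(b,a)}"
      using e ab E_sym[of a b] E_V[of a b] by (auto simp: Nb_def doubleton_eq_iff)
    then show "sum ?g {x. x \<in> ?S \<and> ?f x = e} = 2 * prod ecc' e" using ab e by simp
  qed
  also have "\<dots> = 2 * sigma2 V E" by (simp add: sigma2_def sum_distrib_left)
  finally show ?thesis by simp
qed

lemma parent: assumes "r\<in>V" "v\<in>V" "v\<noteq>r" shows "\<exists>p. E p v \<and> dist E r p < dist E r v"
proof -
  have "(E ^^ dist E r v) r v" by (rule reach) fact+
  moreover have "dist E r v \<noteq> 0" using dist_0[of r v] assms by auto
  ultimately obtain m where m: "dist E r v = Suc m" "(E^^Suc m) r v" by (cases "dist E r v") auto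
  then obtain p where "(E^^m) r p" "E p v" by (auto elim: relpowp_Suc_E)
  then show ?thesis using dist_le[of m r p] m by auto
qed

lemma sum_deg: "(\<Sum>u\<in>V. card (Nb u)) \<ge> 2 * (card V - 1)"
proof -
  obtain r where r: "r \<in> V" using Vne by auto
  define p where "p v = (SOME p. E p v \<and> dist E r p < dist E r v)" for v
  have pv: "E (p v) v \<and> dist E r (p v) < dist E r v" if "v \<in> V - {r}" for v
    unfolding p_def by (rule someI_ex) (use parent[of r v] that r in auto)
  let ?A = "(\<lambda>v. (v, p v)) ` (V - {r})" and ?B = "(\<lambda>v. (p v, v)) ` (V - {r})"
  have cA: "card ?A = card V - 1" by (subst card_image) (auto intro: inj_onI simp: finV r)
  have cB: "card ?B = card V - 1" by (subst card_image) (auto intro: inj_onI simp: finV r)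
  have dj: "?A \<inter> ?B = {}"
  proof (rule ccontr)
    assume "?A \<inter> ?B \<noteq> {}"
    then obtain v w where "v \<in> V - {r}" "w \<in> V - {r}" "v = p w" "p v = w" by auto
    then show False using pv[of v] pv[of w] by auto
  qed
  have pvV: "p v \<in> V" if "v \<in> V - {r}" for v using pv[OF that] E_V by blast
  have sub: "?A \<union> ?B \<subseteq> Sigma V Nb" using pv pvV E_V E_sym by (auto simp: Nb_def)
  have fin: "finite (Sigma V Nb)" using finV finNb by auto
  have "2*(card V - 1) = card (?A \<union> ?B)" using card_Un_disjoint[of ?A ?B] cA cB dj finV by simp
  also have "\<dots> \<le> card (Sigma V Nb)" by (rule card_mono[OF fin sub])
  also have "card (Sigma V Nb) = (\<Sum>u\<in>V. card (Nb u))" using card_SigmaI[OF finV, of Nb] finNb by simp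
  finally show ?thesis .
qed

lemma sigma_formula: assumes "Dm \<noteq> {}" "card V \<ge> 2"
  shows "2 * sigma2 V E = card Dm * (card Dm - 1) + 4 * card Dm * card Rm
     + 4 * (\<Sum>u\<in>Rm. card (Nb u \<inter> Rm))"
proof -
  have e1: "ecc' u = 1" if "u \<in> Dm" for u using ecc_D that assms by simp
  have e2: "ecc' u = 2" if "u \<in> Rm" for u
    using ecc_nD[of u] ecc_le2[of u] that assms by (force simp: Rm_def)
  have fD: "finite Dm" using DV finV finite_subset by blast
  have fR: "finite Rm" using finV by (simp add: Rm_def)
  have VDR: "V = Dm \<union> Rm" "Dm \<inter> Rm = {}" using DV by (auto simp: Rm_def)
  let ?d = "card Dm" and ?r = "card Rm"
  have sumV: "(\<Sum>v\<in>V. ecc' v) = ?d + 2 * ?r"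
  proof -
    have "(\<Sum>v\<in>V. ecc' v) = (\<Sum>v\<in>Dm. ecc' v) + (\<Sum>v\<in>Rm. ecc' v)"
      by (rule sum_split)
    also have "\<dots> = ?d + 2 * ?r" using e1 e2 by simp
    finally show ?thesis .
  qed
  have pD: "(\<Sum>v\<in>Nb u. ecc' u * ecc' v) = ?d + 2 * ?r - 1" if "u \<in> Dm" for u
  proof -
    have "Nb u = V - {u}" using that E_irr by (auto simp: Nb_def Dm_def)
    moreover have "u \<in> V" using that DV by auto
    ultimately have "(\<Sum>v\<in>Nb u. ecc' v) = (\<Sum>v\<in>V. ecc' v) - ecc' u"
      using finV by (simp add: sum_diff1_nat)
    then show ?thesis using sumV e1[OF that] by simp
  qed
  have pR: "(\<Sum>v\<in>Nb u. ecc' u * ecc' v) = 2 * ?d + 4 * card (Nb u \<inter> Rm)" if "u \<in> Rm" for u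
  proof -
    have "Nb u = Dm \<union> (Nb u \<inter> Rm)"
    proof (intro equalityI subsetI)
      fix v assume "v \<in> Nb u" then show "v \<in> Dm \<union> (Nb u \<inter> Rm)" by (auto simp: Rm_def Nb_def)
    next
      fix v assume v: "v \<in> Dm \<union> (Nb u \<inter> Rm)"
      show "v \<in> Nb u"
      proof (cases "v \<in> Dm")
        case True then have "v \<noteq> u" using that by (auto simp: Rm_def)
        then have "E v u" using True that by (auto simp: Dm_def Rm_def)
        then show ?thesis using E_sym E_V by (auto simp: Nb_def)
      next
        case False then show ?thesis using v by auto
      qed
    qed
    then have "(\<Sum>v\<in>Nb u. ecc' v) = (\<Sum>v\<in>Dm. ecc' v) + (\<Sum>v\<in>Nb u \<inter> Rm. ecc' v)"
      using fD fR VDR by (metis (no_types, lifting) Int_commute Int_left_commute finite_Int inf_bot_right sum.union_disjoint)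
    also have "\<dots> = ?d + 2 * card (Nb u \<inter> Rm)" using e1 e2 by simp
    finally show ?thesis using e2[OF that] by (simp add: sum_distrib_left[symmetric])
  qed
  have "2 * sigma2 V E = (\<Sum>u\<in>Dm. \<Sum>v\<in>Nb u. ecc' u * ecc' v) + (\<Sum>u\<in>Rm. \<Sum>v\<in>Nb u. ecc' u * ecc' v)"
    using sigma2_double sum_split by simp
  also have "\<dots> = ?d * (?d + 2 * ?r - 1) + (\<Sum>u\<in>Rm. 2 * ?d + 4 * card (Nb u \<inter> Rm))"
    using pD pR by simp
  also have "\<dots> = ?d * (?d + 2 * ?r - 1) + 2 * ?d * ?r + 4 * (\<Sum>u\<in>Rm. card (Nb u \<inter> Rm))"
    by (simp add: sum.distrib sum_distrib_left)
  also have "\<dots> = ?d * (?d - 1) + 4 * ?d * ?r + 4 * (\<Sum>u\<in>Rm. card (Nb u \<inter> Rm))"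
  proof -
    have "?d \<ge> 1" using assms fD by (simp add: Suc_leI card_gt_0_iff)
    then show ?thesis by (cases ?d) (auto simp: algebra_simps)
  qed
  finally show ?thesis .
qed

lemma matching_fin: "is_matching E M \<Longrightarrow> finite M"
  using finE by (auto simp: is_matching_def intro: finite_subset)

lemma mnum: "\<exists>M. is_matching E M \<and> card M = matching_number E"
        "is_matching E M \<Longrightarrow> card M \<le> matching_number E"
proof -
  let ?K = "{card M | M. is_matching E M}"
  have "?K \<subseteq> card ` Pow (edges E)" by (auto simp: is_matching_def)
  then have fK: "finite ?K" using finE by (meson finite_Pow_iff finite_imageI finite_subset)
  have "is_matching E {}" by (simp add: is_matching_def)
  then have neK: "?K \<noteq> {}" by blast
  show "\<exists>M. is_matching E M \<and> card M = matching_number E"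
    using Max_in[OF fK neK] unfolding matching_number_def by auto
  show "is_matching E M \<Longrightarrow> card M \<le> matching_number E"
    using Max_ge[OF fK] unfolding matching_number_def by auto
qed

definition "Mi M = {e\<in>M. e \<inter> Dm = {}}"

lemma fD: "finite Dm" using DV finV finite_subset by blast
lemma fR: "finite Rm" using finV by (simp add: Rm_def)

lemma matching_edge: assumes "is_matching E M" "e \<in> M"
  obtains a b where "e = {a,b}" "E a b"
  using assms by (auto simp: is_matching_def edges_def)

lemma card_Mi: assumes "is_matching E M" shows "card M \<le> card (Mi M) + card Dm"
proof -
  have fM: "finite M" using matching_fin[OF assms] .
  define ch where "ch e = (SOME x. x \<in> e \<inter> Dm)" for e :: "'a set"
  have ch: "ch e \<in> e \<inter> Dm" if "e \<in> M - Mi M" for e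
    unfolding ch_def by (rule someI_ex) (use that in \<open>auto simp: Mi_def\<close>)
  have "inj_on ch (M - Mi M)"
  proof (rule inj_onI)
    fix e1 e2 assume "e1 \<in> M - Mi M" "e2 \<in> M - Mi M" "ch e1 = ch e2"
    then show "e1 = e2" using ch[of e1] ch[of e2] assms by (auto simp: is_matching_def)
  qed
  moreover have "ch ` (M - Mi M) \<subseteq> Dm" using ch by auto
  ultimately have "card (M - Mi M) \<le> card Dm" using card_inj_on_le fD by blast
  moreover have "card M = card (Mi M) + card (M - Mi M)"
  proof -
    have sub: "Mi M \<subseteq> M" by (auto simp: Mi_def)
    have "card (M - Mi M) = card M - card (Mi M)" using card_Diff_subset[OF finite_subset[OF sub fM] sub] .
    moreover have "card (Mi M) \<le> card M" using card_mono[OF fM sub] .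
    ultimately show ?thesis by simp
  qed
  ultimately show ?thesis by simp
qed

lemma Mi_sub: assumes "is_matching E M" "e \<in> Mi M" shows "e \<subseteq> Rm"
proof -
  have "e \<in> M" using assms(2) by (simp add: Mi_def)
  obtain a b where "e = {a,b}" "E a b" using matching_edge[OF assms(1) \<open>e \<in> M\<close>] by blast
  then show ?thesis using assms E_V by (auto simp: Mi_def Rm_def)
qed

lemma card_C: assumes "is_matching E M" shows "card (\<Union>(Mi M)) = 2 * card (Mi M)"
proof -
  have "pairwise disjnt (Mi M)" using assms
    by (auto simp: pairwise_def disjnt_def Mi_def is_matching_def)
  moreover have "finite e" "card e = 2" if "e \<in> Mi M" for e
  proof -
    have "e \<in> M" using that by (simp add: Mi_def)
    obtain a b where "e = {a,b}" "E a b" using matching_edge[OF assms(1) \<open>e \<in> M\<close>] by blast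
    then show "finite e" "card e = 2" using E_irr by auto
  qed
  ultimately show ?thesis by (simp add: card_Union_disjoint)
qed

lemma C_deg: assumes "is_matching E M" "e \<in> Mi M" "u \<in> e"
  obtains w where "e = {u,w}" "E u w" "w \<in> Rm" "u \<noteq> w"
proof -
  have "e \<in> M" using assms(2) by (simp add: Mi_def)
  obtain a b where ab: "e = {a,b}" "E a b" using matching_edge[OF assms(1) \<open>e \<in> M\<close>] by blast
  have "e \<subseteq> Rm" by (rule Mi_sub[OF assms(1,2)])
  then show ?thesis using that ab assms(3) E_sym E_irr by (auto simp: insert_commute)
qed

lemma match_lower: assumes "is_matching E M"
  shows "2 * card (Mi M) \<le> (\<Sum>u\<in>Rm. card (Nb u \<inter> Rm))"
proof -
  let ?C = "\<Union>(Mi M)"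
  have CR: "?C \<subseteq> Rm" using Mi_sub[OF assms] by blast
  have d1: "card (Nb u \<inter> Rm) \<ge> 1" if u_in: "u \<in> ?C" for u
  proof -
    obtain e where "e \<in> Mi M" "u \<in> e" using u_in by blast
    then obtain w where "E u w" "w \<in> Rm" by (rule C_deg[OF assms])
    then have "w \<in> Nb u \<inter> Rm" using E_V by (auto simp: Nb_def)
    then show ?thesis using finNb by (metis One_nat_def Suc_leI card_gt_0_iff empty_iff finite_Int)
  qed
  have "2 * card (Mi M) = card ?C" using card_C[OF assms] by simp
  also have "\<dots> = (\<Sum>u\<in>?C. 1)" by simp
  also have "\<dots> \<le> (\<Sum>u\<in>?C. card (Nb u \<inter> Rm))" using d1 by (rule sum_mono)
  also have "\<dots> \<le> (\<Sum>u\<in>Rm. card (Nb u \<inter> Rm))" using CR fR by (intro sum_mono2) auto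
  finally show ?thesis .
qed

lemma dom_matching: assumes "j \<le> card Dm" "2*j \<le> card V"
  shows "\<exists>M. is_matching E M \<and> card M = j"
proof -
  obtain D' where D': "D' \<subseteq> Dm" "card D' = j" "finite D'" using obtain_subset_with_card_n[OF assms(1)] by metis
  have D'V: "D' \<subseteq> V" using D' DV by blast
  have "card (V - D') = card V - j" using card_Diff_subset[OF D'(3) D'V] D'(2) by simp
  then have "j \<le> card (V - D')" using assms by simp
  then obtain T where T: "T \<subseteq> V - D'" "card T = j" "finite T" using obtain_subset_with_card_n by metis
  obtain h where h: "bij_betw h D' T" using finite_same_card_bij[OF D'(3) T(3)] D'(2) T(2) by auto
  have hT: "h x \<in> T" if "x \<in> D'" for x using h that bij_betwE by blast
  have hE: "E x (h x)" if "x \<in> D'" for x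
  proof -
    have "h x \<in> V" "h x \<noteq> x" using hT[OF that] T that by auto
    then show ?thesis using that D' by (auto simp: Dm_def)
  qed
  have hinj: "inj_on h D'" using h by (simp add: bij_betw_def)
  let ?M = "(\<lambda>x. {x, h x}) ` D'"
  have "is_matching E ?M"
    unfolding is_matching_def
  proof (intro conjI ballI impI)
    show "?M \<subseteq> edges E" using hE by (auto simp: edges_def)
  next
    fix e1 e2 assume "e1 \<in> ?M" "e2 \<in> ?M" "e1 \<noteq> e2"
    then obtain x y where xy: "x \<in> D'" "y \<in> D'" "e1 = {x, h x}" "e2 = {y, h y}" "x \<noteq> y" by auto
    have "h x \<noteq> h y" using hinj xy by (meson inj_onD)
    moreover have "h x \<notin> D'" "h y \<notin> D'" using hT xy T by auto
    ultimately show "e1 \<inter> e2 = {}" using xy by auto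
  qed
  moreover have "card ?M = j"
  proof -
    have "inj_on (\<lambda>x. {x, h x}) D'"
    proof (rule inj_onI)
      fix x y assume "x \<in> D'" "y \<in> D'" "{x, h x} = {y, h y}"
      moreover have "h x \<notin> D'" "h y \<notin> D'" using hT \<open>x\<in>D'\<close> \<open>y\<in>D'\<close> T by auto
      ultimately show "x = y" by (auto simp: doubleton_eq_iff)
    qed
    then show ?thesis using D'(2) by (simp add: card_image)
  qed
  ultimately show ?thesis by blast
qed

lemma Mi_unique: assumes "is_matching E M" "e1 \<in> Mi M" "e2 \<in> Mi M" "x \<in> e1" "x \<in> e2" shows "e1 = e2"
  using assms by (auto simp: is_matching_def Mi_def)

lemma join_structure:
  assumes M: "is_matching E M" and cM: "card M = k" and D1: "card Dm = 1" and k1: "k \<ge> 1"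
    and S: "(\<Sum>u\<in>Rm. card (Nb u \<inter> Rm)) = 2*(k-1)"
  shows "card (Mi M) = k - 1"
    and "\<And>u v. u \<in> Rm \<Longrightarrow> v \<in> Rm \<Longrightarrow> E u v \<longleftrightarrow> (\<exists>e\<in>Mi M. u \<in> e \<and> v \<in> e \<and> u \<noteq> v)"
proof -
  let ?C = "\<Union>(Mi M)"
  let ?deg = "\<lambda>u. card (Nb u \<inter> Rm)"
  have CR: "?C \<subseteq> Rm" using Mi_sub[OF M] by blast
  have fC: "finite ?C" using CR fR finite_subset by blast
  have cC: "card ?C = 2 * card (Mi M)" by (rule card_C[OF M])
  have kMi: "k \<le> card (Mi M) + 1" using card_Mi[OF M] cM D1 by simp
  have d1: "?deg u \<ge> 1" if u_in: "u \<in> ?C" for u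
  proof -
    obtain e where "e \<in> Mi M" "u \<in> e" using u_in by blast
    then obtain w where "E u w" "w \<in> Rm" by (rule C_deg[OF M])
    then have "w \<in> Nb u \<inter> Rm" using E_V by (auto simp: Nb_def)
    then show ?thesis using finNb by (metis One_nat_def Suc_leI card_gt_0_iff empty_iff finite_Int)
  qed
  have split: "(\<Sum>u\<in>Rm. ?deg u) = (\<Sum>u\<in>?C. ?deg u) + (\<Sum>u\<in>Rm - ?C. ?deg u)"
    using sum.subset_diff[OF CR fR, of ?deg] by simp
  have ge: "(\<Sum>u\<in>?C. ?deg u) \<ge> card ?C"
    using sum_mono[of ?C "\<lambda>_. 1" ?deg] d1 by simp
  have z: "(\<Sum>u\<in>Rm - ?C. ?deg u) = 0" and eqC: "(\<Sum>u\<in>?C. ?deg u) = card ?C"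
     and cMi: "card (Mi M) = k - 1"
    using split ge S cC kMi by linarith+
  show "card (Mi M) = k - 1" by (rule cMi)
  have deg0: "?deg u = 0" if "u \<in> Rm - ?C" for u
    using z that fR by (simp add: sum_eq_0_iff)
  have deg1: "?deg u = 1" if u_in: "u \<in> ?C" for u
  proof -
    have "(\<Sum>u\<in>?C. ?deg u - 1) = (\<Sum>u\<in>?C. ?deg u) - (\<Sum>u\<in>?C. 1)"
      by (rule sum_subtractf_nat) (use d1 in auto)
    then have "(\<Sum>u\<in>?C. ?deg u - 1) = 0" using eqC by simp
    then have "\<forall>x\<in>?C. ?deg x - 1 = 0" by (simp only: sum_eq_0_iff[OF fC])
    then have "?deg u - 1 = 0" using u_in by blast
    then show ?thesis using d1[OF u_in] by simp
  qed
  fix u v assume uR: "u \<in> Rm" and vR: "v \<in> Rm"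
  show "E u v \<longleftrightarrow> (\<exists>e\<in>Mi M. u \<in> e \<and> v \<in> e \<and> u \<noteq> v)"
  proof
    assume Euv: "E u v"
    then have vN: "v \<in> Nb u \<inter> Rm" using vR E_V by (auto simp: Nb_def)
    show "\<exists>e\<in>Mi M. u \<in> e \<and> v \<in> e \<and> u \<noteq> v"
    proof (cases "u \<in> ?C")
      case True
      then obtain e where e: "e \<in> Mi M" "u \<in> e" by blast
      then obtain w where w: "e = {u,w}" "E u w" "w \<in> Rm" "u \<noteq> w" by (rule C_deg[OF M])
      then have wN: "w \<in> Nb u \<inter> Rm" using E_V by (auto simp: Nb_def)
      have "?deg u = 1" using deg1[OF True] .
      then obtain z where "Nb u \<inter> Rm = {z}" by (meson card_1_singletonE)
      then have "v = w" using vN wN by auto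
      then show ?thesis using e w by auto
    next
      case False
      then have "?deg u = 0" using deg0 uR by blast
      then show ?thesis using vN finNb by (metis card_0_eq empty_iff finite_Int)
    qed
  next
    assume "\<exists>e\<in>Mi M. u \<in> e \<and> v \<in> e \<and> u \<noteq> v"
    then obtain e where e: "e \<in> Mi M" "u \<in> e" "v \<in> e" "u \<noteq> v" by blast
    obtain w where w: "e = {u,w}" "E u w" using C_deg[OF M e(1,2)] by blast
    then show "E u v" using e by auto
  qed
qed

lemma iso_from_g:
  fixes n :: nat
  assumes g: "\<And>j. j < n \<Longrightarrow> g j \<in> V" "inj_on g {0..<n}"
    and adj: "\<And>i j. i < n \<Longrightarrow> j < n \<Longrightarrow> E (g i) (g j) \<longleftrightarrow> F i j"
    and n: "card V = n"
  shows "graph_iso V E {0..<n} F"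
proof -
  have sub: "g ` {0..<n} \<subseteq> V" using g by auto
  have "card (g ` {0..<n}) = n" using g(2) by (simp add: card_image)
  then have "g ` {0..<n} = V" using card_subset_eq[OF finV sub] n by simp
  then have bg: "bij_betw g {0..<n} V" using g(2) by (simp add: bij_betw_def)
  define f where "f = inv_into {0..<n} g"
  have bf: "bij_betw f V {0..<n}" unfolding f_def by (rule bij_betw_inv_into[OF bg])
  have gf: "g (f u) = u" if "u \<in> V" for u
    unfolding f_def using that \<open>g ` {0..<n} = V\<close> by (simp add: f_inv_into_f)
  have fl: "f u < n" if "u \<in> V" for u using bf that bij_betwE by fastforce
  show ?thesis unfolding graph_iso_def
  proof (intro exI conjI ballI)
    show "bij_betw f V {0..<n}" by (rule bf)
    fix u v assume "u \<in> V" "v \<in> V"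
    then show "E u v \<longleftrightarrow> F (f u) (f v)" using adj[OF fl fl] gf by metis
  qed
qed

lemma join_iso:
  assumes Dc: "Dm = {c}" and M: "is_matching E M" and cMi: "card (Mi M) = k - 1"
    and adj: "\<And>u v. u\<in>Rm \<Longrightarrow> v\<in>Rm \<Longrightarrow> E u v \<longleftrightarrow> (\<exists>e\<in>Mi M. u\<in>e \<and> v\<in>e \<and> u\<noteq>v)"
    and n: "card V = n" and k2: "2 \<le> k" "2*k \<le> n"
  shows "graph_iso V E {0..<n} (join_adj n k)"
proof -
  let ?C = "\<Union>(Mi M)"
  have CR: "?C \<subseteq> Rm" using Mi_sub[OF M] by blast
  have cC: "card ?C = 2*(k-1)" using card_C[OF M] cMi by simp
  have cR: "card Rm = n - 1" using Dc n DV finV by (simp add: Rm_def card_Diff_subset)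
  have cRC: "card (Rm - ?C) = n + 1 - 2*k" using card_Diff_subset[OF finite_subset[OF CR fR] CR] cC cR k2 by simp
  have cV: "c \<in> V" "c \<notin> Rm" using Dc DV by (auto simp: Rm_def)
  have cdom: "E c u" if "u \<in> V" "u \<noteq> c" for u using Dc that by (auto simp: Dm_def)
  have RV: "Rm \<subseteq> V" by (auto simp: Rm_def)
  have VcR: "u \<in> Rm" if "u \<in> V" "u \<noteq> c" for u using that Dc by (auto simp: Rm_def)
  obtain q where q: "bij_betw q {0..<k-1} (Mi M)" using ex_bij_betw_nat_finite[of "Mi M"] cMi
    by (metis M finite_UnionD finite_subset fR CR)
  obtain s where s: "bij_betw s {0..<n+1-2*k} (Rm - ?C)"
    using ex_bij_betw_nat_finite[of "Rm - ?C"] cRC fR by auto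
  define fe where "fe e = (SOME a. \<exists>b. e = {a,b} \<and> a \<noteq> b)" for e :: "'a set"
  define se where "se e = (SOME b. e = {fe e, b} \<and> fe e \<noteq> b)" for e :: "'a set"
  have fese: "e = {fe e, se e} \<and> fe e \<noteq> se e" if "e \<in> Mi M" for e
  proof -
    have "e \<in> M" using that by (simp add: Mi_def)
    then obtain a b where ab: "e = {a,b}" "E a b" using matching_edge[OF M] by blast
    then have "\<exists>a b. e = {a,b} \<and> a \<noteq> b" using E_irr by blast
    then have "\<exists>b. e = {fe e, b} \<and> fe e \<noteq> b" unfolding fe_def by (rule someI_ex)
    then show ?thesis unfolding se_def by (rule someI_ex)
  qed
  define g where "g j = (if j = 0 then c else if j \<le> 2*k-2 then
     (if odd j then fe (q ((j-1) div 2)) else se (q ((j-1) div 2))) else s (j - (2*k-1)))" for j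
  have qM: "q i \<in> Mi M" if "i < k - 1" for i using q that bij_betwE by fastforce
  have gCi: "(j-1) div 2 < k - 1" if "1 \<le> j" "j \<le> 2*k-2" for j using gci[OF that] .
  have gC: "g j \<in> q ((j-1) div 2)" if "1 \<le> j" "j \<le> 2*k-2" for j
  proof -
    have "q ((j-1) div 2) = {fe (q ((j-1) div 2)), se (q ((j-1) div 2))}"
      using fese[OF qM[OF gCi[OF that]]] by blast
    moreover have "g j = (if odd j then fe (q ((j-1) div 2)) else se (q ((j-1) div 2)))"
      using that by (simp add: g_def)
    ultimately show ?thesis by (metis insertI1 insertI2 singletonI)
  qed
  have inC: "g j \<in> ?C" if "1 \<le> j" "j \<le> 2*k-2" for j using gC[OF that] qM[OF gCi[OF that]] by blast
  have gRC: "g j \<in> Rm - ?C" if "2*k-2 < j" "j < n" for j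
  proof -
    have "j - (2*k-1) < n + 1 - 2*k" using that k2 by simp
    then show ?thesis using s that bij_betwE k2 unfolding g_def by fastforce
  qed
  have gR: "g j \<in> Rm" if "1 \<le> j" "j < n" for j
  proof (cases "j \<le> 2*k-2")
    case True then show ?thesis using gC[OF that(1) True] qM[OF gCi[OF that(1) True]] CR by blast
  next
    case False then show ?thesis using gRC[of j] that by simp
  qed
  have gV: "g j \<in> V" if "j < n" for j
    using gR[of j] that cV RV by (cases "j = 0") (auto simp: g_def)
  have g0: "g 0 = c" by (simp add: g_def)
  have inCe: "(\<exists>e\<in>Mi M. g i \<in> e \<and> g j \<in> e \<and> g i \<noteq> g j) \<longleftrightarrow> (i \<le> 2*k-2 \<and> j \<le> 2*k-2 \<and> (i-1) div 2 = (j-1) div 2 \<and> i \<noteq> j)"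
    if "1 \<le> i" "i < n" "1 \<le> j" "j < n" for i j
  proof (cases "i \<le> 2*k-2 \<and> j \<le> 2*k-2")
    case True
    let ?a = "(i-1) div 2" and ?b = "(j-1) div 2"
    have ia: "g i \<in> q ?a" "q ?a \<in> Mi M" using gC[of i] qM[OF gCi[of i]] True that(1) by simp_all
    have jb: "g j \<in> q ?b" "q ?b \<in> Mi M" using gC[of j] qM[OF gCi[of j]] True that(3) by simp_all
    have qinj: "q ?a = q ?b \<longleftrightarrow> ?a = ?b" using q gCi True that by (auto simp: bij_betw_def inj_on_def)
    have gfs: "g i = (if odd i then fe (q ?a) else se (q ?a))" "g j = (if odd j then fe (q ?b) else se (q ?b))"
      using True that by (auto simp: g_def)
    show ?thesis
    proof
      assume "\<exists>e\<in>Mi M. g i \<in> e \<and> g j \<in> e \<and> g i \<noteq> g j"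
      then obtain e where e: "e \<in> Mi M" "g i \<in> e" "g j \<in> e" "g i \<noteq> g j" by blast
      have "e = q ?a" using Mi_unique[OF M e(1) ia(2) e(2) ia(1)] .
      moreover have "e = q ?b" using Mi_unique[OF M e(1) jb(2) e(3) jb(1)] .
      ultimately have ab: "?a = ?b" using qinj by simp
      have "i \<noteq> j" using e(4) by auto
      then show "i \<le> 2*k-2 \<and> j \<le> 2*k-2 \<and> ?a = ?b \<and> i \<noteq> j" using True ab by simp
    next
      assume h: "i \<le> 2*k-2 \<and> j \<le> 2*k-2 \<and> ?a = ?b \<and> i \<noteq> j"
      then have "odd i \<noteq> odd j" using par_eq[of i j] that(1,3) by blast
      then have "g i \<noteq> g j" using gfs fese[OF ia(2)] h by auto
      then show "\<exists>e\<in>Mi M. g i \<in> e \<and> g j \<in> e \<and> g i \<noteq> g j" using ia jb h by auto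
    qed
  next
    case False
    then have "g i \<notin> ?C \<or> g j \<notin> ?C" using gRC[of i] gRC[of j] that by auto
    then show ?thesis using False by auto
  qed
  show ?thesis
  proof (rule iso_from_g[OF _ _ _ n])
    show "g j \<in> V" if "j < n" for j using gV that .
    show "inj_on g {0..<n}"
    proof (rule inj_onI)
      fix i j assume i: "i \<in> {0..<n}" and j: "j \<in> {0..<n}" and eq: "g i = g j"
      show "i = j"
      proof (cases "i = 0 \<or> j = 0")
        case True
        then show ?thesis using gR[of i] gR[of j] i j eq g0 cV by (cases "i = 0"; cases "j = 0") auto
      next
        case False
        then have ij1: "1 \<le> i" "1 \<le> j" by auto
        have "g i \<in> Rm" using gR[of i] ij1 i by simp
        show ?thesis
        proof (rule ccontr)
          assume ne: "i \<noteq> j"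
          show False
          proof (cases "i \<le> 2*k-2 \<and> j \<le> 2*k-2")
            case True
            have "\<not> ((\<exists>e\<in>Mi M. g i \<in> e \<and> g j \<in> e \<and> g i \<noteq> g j))" using eq by blast
            then have "(i-1) div 2 \<noteq> (j-1) div 2" using inCe[OF ij1(1) _ ij1(2)] i j True ne by auto
            have ia: "g i \<in> q ((i-1) div 2)" "q ((i-1) div 2) \<in> Mi M" using gC[of i] qM[OF gCi[of i]] True ij1 by simp_all
            have jb: "g j \<in> q ((j-1) div 2)" "q ((j-1) div 2) \<in> Mi M" using gC[of j] qM[OF gCi[of j]] True ij1 by simp_all
            have "q ((i-1) div 2) = q ((j-1) div 2)" using Mi_unique[OF M ia(2) jb(2) ia(1)] jb(1) eq by simp
            then have "(i-1) div 2 = (j-1) div 2" using q gCi True ij1 by (auto simp: bij_betw_def inj_on_def)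
            then show False using \<open>(i-1) div 2 \<noteq> (j-1) div 2\<close> by simp
          next
            case F2: False
            show False
            proof (cases "i \<le> 2*k-2 \<or> j \<le> 2*k-2")
              case True
              show False
              proof (cases "i \<le> 2*k-2")
                case iT: True
                then have "\<not> j \<le> 2*k-2" using F2 by simp
                then show False using inC[OF ij1(1) iT] gRC[of j] j eq by auto
              next
                case iF: False
                then have jT: "j \<le> 2*k-2" using True by simp
                then show False using inC[OF ij1(2) jT] gRC[of i] i eq iF by auto
              qed
            next
              case False
              then have "i - (2*k-1) < n + 1 - 2*k" "j - (2*k-1) < n + 1 - 2*k" using i j k2 by auto
              moreover have "s (i - (2*k-1)) = s (j - (2*k-1))" using eq False ij1 by (simp add: g_def)
              ultimately have "i - (2*k-1) = j - (2*k-1)" using s by (auto simp: bij_betw_def inj_on_def)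
              then show False using False ne k2 by arith
            qed
          qed
        qed
      qed
    qed
    fix i j assume i: "i < n" and j: "j < n"
    show "E (g i) (g j) \<longleftrightarrow> join_adj n k i j"
    proof (cases "i = 0 \<or> j = 0")
      case True
      have ne: "g i \<noteq> g j \<longleftrightarrow> i \<noteq> j"
        using True gR[of i] gR[of j] i j g0 cV by (cases "i = 0"; cases "j = 0") auto
      have ja: "join_adj n k i j \<longleftrightarrow> i \<noteq> j" using True i j unfolding join_adj_def by blast
      have ea: "E (g i) (g j) \<longleftrightarrow> g i \<noteq> g j"
      proof (cases "i = 0")
        case True
        then show ?thesis using cdom[of "g j"] gV[OF j] E_irr g0 by auto
      next
        case False
        then have "j = 0" using \<open>i = 0 \<or> j = 0\<close> by simp
        then show ?thesis using cdom[of "g i"] gV[OF i] E_irr E_sym g0 by metis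
      qed
      show ?thesis using ea ne ja by simp
    next
      case False
      then have ij1: "1 \<le> i" "1 \<le> j" by auto
      have "E (g i) (g j) \<longleftrightarrow> (i \<le> 2*k-2 \<and> j \<le> 2*k-2 \<and> (i-1) div 2 = (j-1) div 2 \<and> i \<noteq> j)"
        using adj[OF gR[OF ij1(1) i] gR[OF ij1(2) j]] inCe[OF ij1(1) i ij1(2) j] by simp
      also have "\<dots> \<longleftrightarrow> join_adj n k i j"
      proof -
        have pi: "(i+1) div 2 = (i-1) div 2 + 1" using ij1 by (cases i) auto
        have pj: "(j+1) div 2 = (j-1) div 2 + 1" using ij1 by (cases j) auto
        show ?thesis unfolding join_adj_def using ij1 i j pi pj by auto
      qed
      finally show ?thesis .
    qed
  qed
qed

lemma iso_inv: fixes n :: nat assumes "graph_iso V E {0..<n} F"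
  obtains g where "bij_betw g {0..<n} V" "\<And>i j. i < n \<Longrightarrow> j < n \<Longrightarrow> E (g i) (g j) \<longleftrightarrow> F i j"
proof -
  obtain f where f: "bij_betw f V {0..<n}" "\<And>u v. u\<in>V \<Longrightarrow> v\<in>V \<Longrightarrow> E u v \<longleftrightarrow> F (f u) (f v)"
    using assms unfolding graph_iso_def by blast
  define g where "g = inv_into V f"
  have bg: "bij_betw g {0..<n} V" unfolding g_def by (rule bij_betw_inv_into[OF f(1)])
  have fg: "f (g i) = i" if "i < n" for i
  proof -
    have "i \<in> f ` V" using f(1) that by (auto simp: bij_betw_def)
    then show ?thesis unfolding g_def by (rule f_inv_into_f)
  qed
  have gV: "g i \<in> V" if "i < n" for i using bg that bij_betwE by fastforce
  show ?thesis
  proof (rule that[OF bg])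
    fix i j assume "i < n" "j < n"
    then have "E (g i) (g j) \<longleftrightarrow> F (f (g i)) (f (g j))" using f(2)[OF gV gV] by blast
    then show "E (g i) (g j) \<longleftrightarrow> F i j" using fg \<open>i < n\<close> \<open>j < n\<close> by simp
  qed
qed

lemma complete_conv: fixes n :: nat assumes "graph_iso V E {0..<n} (complete_adj n)" shows "Dm = V"
proof -
  obtain g where g: "bij_betw g {0..<n} V" "\<And>i j. i < n \<Longrightarrow> j < n \<Longrightarrow> E (g i) (g j) \<longleftrightarrow> complete_adj n i j"
    using iso_inv[OF assms] by blast
  have "E u w" if "u \<in> V" "w \<in> V" "w \<noteq> u" for u w
  proof -
    have im: "g ` {0..<n} = V" using g(1) by (simp add: bij_betw_def)
    have "u \<in> g ` {0..<n}" "w \<in> g ` {0..<n}" using that(1,2) im by simp_all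
    then obtain i j where i: "i \<in> {0..<n}" "u = g i" and j: "j \<in> {0..<n}" "w = g j" by blast
    then have i: "i < n" "u = g i" and j: "j < n" "w = g j" by auto
    have "E (g i) (g j) \<longleftrightarrow> complete_adj n i j" using g(2) i j by blast
    then show ?thesis using i j that by (auto simp: complete_adj_def)
  qed
  then show ?thesis by (auto simp: Dm_def)
qed

lemma complete_from: fixes n :: nat assumes "Dm = V" "card V = n" shows "graph_iso V E {0..<n} (complete_adj n)"
proof -
  obtain g where g: "bij_betw g {0..<n} V" using ex_bij_betw_nat_finite[OF finV] assms by auto
  show ?thesis
  proof (rule iso_from_g[OF _ _ _ assms(2)])
    show "g j \<in> V" if "j < n" for j using g that bij_betwE by fastforce
    show "inj_on g {0..<n}" using g by (simp add: bij_betw_def)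
    fix i j assume ij: "i < n" "j < n"
    have "g i \<in> V" "g j \<in> V" using g ij bij_betwE by fastforce+
    moreover have "g i = g j \<longleftrightarrow> i = j" using g ij by (auto simp: bij_betw_def inj_on_def)
    moreover have "\<forall>u\<in>V. \<forall>w\<in>V. w \<noteq> u \<longrightarrow> E u w" using assms(1) unfolding Dm_def by blast
    ultimately show "E (g i) (g j) \<longleftrightarrow> complete_adj n i j"
      using E_irr ij by (auto simp: complete_adj_def)
  qed
qed

lemma join_conv: assumes "graph_iso V E {0..<n} (join_adj n k)" "card V = n" "2 \<le> k" "2*k \<le> n"
  shows "card Dm = 1" "(\<Sum>u\<in>Rm. card (Nb u \<inter> Rm)) = 2*(k-1)"
proof -
  obtain g where g: "bij_betw g {0..<n} V" "\<And>i j. i < n \<Longrightarrow> j < n \<Longrightarrow> E (g i) (g j) \<longleftrightarrow> join_adj n k i j"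
    using iso_inv[OF assms(1)] by blast
  have gV: "g i \<in> V" if "i < n" for i using g that bij_betwE by fastforce
  have ginj: "g i = g j \<longleftrightarrow> i = j" if "i < n" "j < n" for i j using g that by (auto simp: bij_betw_def inj_on_def)
  have gsurj: "\<exists>i<n. u = g i" if "u \<in> V" for u
  proof -
    have "g ` {0..<n} = V" using g(1) by (simp add: bij_betw_def)
    then have "u \<in> g ` {0..<n}" using that by simp
    then obtain i where "i \<in> {0..<n}" "u = g i" by blast
    then show ?thesis by auto
  qed
  have n0: "0 < n" using assms by simp
  have D: "Dm = {g 0}"
  proof (intro equalityI subsetI)
    fix u assume u: "u \<in> Dm"
    then obtain i where i: "i < n" "u = g i" using gsurj DV by blast
    show "u \<in> {g 0}"
    proof (rule ccontr)
      assume "u \<notin> {g 0}"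
      then have i1: "i \<ge> 1" using i by (cases i) auto
      define j where "j = (if i \<le> 2*k-2 then n - 1 else 1)"
      have j: "j < n" "j \<noteq> i" "\<not> join_adj n k i j" using assms i i1 unfolding j_def join_adj_def by auto
      then have "g j \<in> V" "g j \<noteq> u" "\<not> E u (g j)" using gV ginj i g(2) by auto
      then show False using u by (auto simp: Dm_def)
    qed
  next
    fix u assume "u \<in> {g 0}"
    then have u: "u = g 0" by simp
    have "E u w" if w_in: "w \<in> V" "w \<noteq> u" for w
    proof -
      obtain j where "j < n" "w = g j" using gsurj w_in(1) by blast
      then show ?thesis using g(2)[OF n0, of j] w_in u by (auto simp: join_adj_def)
    qed
    then show "u \<in> Dm" using u gV n0 by (auto simp: Dm_def)
  qed
  then show "card Dm = 1" by simp
  have R: "Rm = g ` {1..<n}"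
  proof -
    have "g ` {0..<n} = V" using g by (simp add: bij_betw_def)
    moreover have "{0..<n} = insert 0 {1..<n}" using n0 by auto
    moreover have "g 0 \<notin> g ` {1..<n}" using ginj n0 by auto
    ultimately have "V = insert (g 0) (g ` {1..<n})" by simp
    then have "V - {g 0} = g ` {1..<n}" using \<open>g 0 \<notin> g ` {1..<n}\<close> by (simp add: Diff_insert_absorb)
    then show ?thesis unfolding Rm_def D .
  qed
  have injR: "inj_on g {1..<n}" using g by (auto simp: bij_betw_def inj_on_def)
  have NbR: "Nb (g i) \<inter> Rm = g ` {j\<in>{1..<n}. join_adj n k i j}" if "1 \<le> i" "i < n" for i
  proof -
    have "Nb (g i) \<inter> Rm = {v \<in> g ` {1..<n}. E (g i) v}" unfolding R Nb_def using gV by auto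
    also have "\<dots> = g ` {j\<in>{1..<n}. join_adj n k i j}" using g(2) that by auto
    finally show ?thesis .
  qed
  have hval: "card {j\<in>{1..<n}. join_adj n k i j} = (if i \<le> 2*k-2 then 1 else 0)" if "1 \<le> i" "i < n" for i
  proof (cases "i \<le> 2*k-2")
    case True
    define p where "p = (if odd i then i+1 else i-1)"
    have "{j\<in>{1..<n}. join_adj n k i j} = {p}"
    proof -
      have "\<And>j. (1 \<le> j \<and> j < n \<and> join_adj n k i j) \<longleftrightarrow> j = p"
      proof -
        fix j
        have "(1 \<le> j \<and> j < n \<and> join_adj n k i j) \<longleftrightarrow>
            (1 \<le> j \<and> j \<noteq> i \<and> j \<le> 2*k-2 \<and> (i + 1) div 2 = (j + 1) div 2)"
          using that True assms(4) unfolding join_adj_def by auto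
        also have "\<dots> \<longleftrightarrow> j = p" unfolding p_def using partner[OF that(1) True even_2k, of j] by simp
        finally show "(1 \<le> j \<and> j < n \<and> join_adj n k i j) \<longleftrightarrow> j = p" .
      qed
      then show ?thesis by auto
    qed
    then show ?thesis using True by simp
  next
    case False
    then have "{j\<in>{1..<n}. join_adj n k i j} = {}" using that unfolding join_adj_def by auto
    then show ?thesis using False by simp
  qed
  have "(\<Sum>u\<in>Rm. card (Nb u \<inter> Rm)) = (\<Sum>i\<in>{1..<n}. card (Nb (g i) \<inter> Rm))"
    unfolding R by (rule sum.reindex[OF injR, unfolded comp_def])
  also have "\<dots> = (\<Sum>i\<in>{1..<n}. card {j\<in>{1..<n}. join_adj n k i j})"
  proof (rule sum.cong[OF refl])
    fix i assume "i \<in> {1..<n}"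
    then have "inj_on g {j\<in>{1..<n}. join_adj n k i j}" using injR by (auto intro: inj_on_subset)
    then show "card (Nb (g i) \<inter> Rm) = card {j\<in>{1..<n}. join_adj n k i j}"
      using NbR \<open>i \<in> {1..<n}\<close> by (simp add: card_image)
  qed
  also have "\<dots> = (\<Sum>i\<in>{1..<n}. if i \<le> 2*k-2 then 1 else 0)"
    using hval by (intro sum.cong) auto
  also have "\<dots> = card {i\<in>{1..<n}. i \<le> 2*k-2}"
    using sum.inter_filter[of "{1..<n}" "\<lambda>_. (1::nat)" "\<lambda>i. i \<le> 2*k-2"] by simp
  also have "{i\<in>{1..<n}. i \<le> 2*k-2} = {1..2*k-2}" using assms by auto
  also have "card {1..2*k-2} = 2*(k-1)" using assms by simp
  finally show "(\<Sum>u\<in>Rm. card (Nb u \<inter> Rm)) = 2*(k-1)" .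
qed

end

lemma two_choose: "2 * (n choose 2) = n * (n - 1)"
proof -
  have "even (n * (n - 1))" by (cases "even n") auto
  then show ?thesis by (simp add: choose_two)
qed

theorem theorem5p5:
  fixes V :: "'a set" and E :: "'a \<Rightarrow> 'a \<Rightarrow> bool" and n k :: nat
  assumes "simple_graph V E" and "connected_graph V E"
    and "card V = n" and "matching_number E = k"
    and "2 \<le> k" and "k \<le> n div 2"
  shows "(if 4 \<le> n \<and> n \<le> 6 \<and> k = n div 2
          then sigma2 V E \<ge> n choose 2 \<and>
               (sigma2 V E = n choose 2 \<longleftrightarrow> graph_iso V E {0..<n} (complete_adj n))
          else sigma2 V E \<ge> 2*n + 4*k - 6 \<and>
               (sigma2 V E = 2*n + 4*k - 6 \<longleftrightarrow> graph_iso V E {0..<n} (join_adj n k)))"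
proof -
  interpret sg V E using assms(1,2) by unfold_locales
  have k2n: "2*k \<le> n" using assms(6) by linarith
  have n4: "4 \<le> n" using assms(5) k2n by linarith
  have n2: "card V \<ge> 2" using n4 assms(3) by simp
  obtain M where M: "is_matching E M" "card M = k" using mnum(1) assms(4) by auto
  define d where "d = card Dm"
  define r where "r = card Rm"
  define S where "S = (\<Sum>u\<in>Rm. card (Nb u \<inter> Rm))"
  define x where "x = 2 * sigma2 V E"
  have ndr: "n = d + r" using sum_split[of "\<lambda>_. (1::nat)"] assms(3) by (simp add: d_def r_def)
  have F0: "8*(n-1) \<le> x" if d0: "d = 0"
  proof -
    have "Dm = {}" using fD d0 by (simp add: d_def)
    then have e2: "ecc' u \<ge> 2" if "u \<in> V" for u using ecc_nD that by auto
    have "(\<Sum>u\<in>V. \<Sum>v\<in>Nb u. (4::nat)) \<le> (\<Sum>u\<in>V. \<Sum>v\<in>Nb u. ecc' u * ecc' v)"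
    proof (intro sum_mono)
      fix u v assume "u \<in> V" "v \<in> Nb u"
      then have "v \<in> V" by (simp add: Nb_def)
      then have "2 * 2 \<le> ecc' u * ecc' v" using e2 \<open>u \<in> V\<close> by (intro mult_le_mono) auto
      then show "4 \<le> ecc' u * ecc' v" by simp
    qed
    moreover have "(\<Sum>u\<in>V. \<Sum>v\<in>Nb u. (4::nat)) = 4 * (\<Sum>u\<in>V. card (Nb u))"
      by (simp add: sum_distrib_left mult.commute)
    ultimately have "4 * (\<Sum>u\<in>V. card (Nb u)) \<le> x" using sigma2_double by (simp add: x_def)
    moreover have "2 * (n - 1) \<le> (\<Sum>u\<in>V. card (Nb u))" using sum_deg assms(3) by simp
    ultimately show ?thesis by linarith
  qed
  have F1: "x = d*(d-1) + 4*d*r + 4*S" if d1: "d \<ge> 1"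
  proof -
    have "Dm \<noteq> {}" using d1 by (auto simp: d_def)
    then show ?thesis using sigma_formula[OF _ n2] by (simp add: x_def d_def r_def S_def)
  qed
  have F2: "2*(k - d) \<le> S"
    using card_Mi[OF M(1)] match_lower[OF M(1)] M(2) by (simp add: d_def S_def)
  have F3: "n < 2*(k+1)" if kd: "k+1 \<le> d"
  proof (rule ccontr)
    assume "\<not> n < 2*(k+1)"
    then obtain M' where "is_matching E M'" "card M' = k+1"
      using dom_matching[of "k+1"] kd assms(3) by (auto simp: d_def)
    then show False using mnum(2)[of M'] assms(4) by simp
  qed
  have cond: "(4 \<le> n \<and> n \<le> 6 \<and> k = n div 2) \<longleftrightarrow> (4 \<le> int n \<and> int n \<le> 6 \<and> 2 * int k + 1 \<ge> int n)"
    using k2n by auto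
  note AM = arith_main[of "int d" "int r" "int S" "int n" "int k" "int x"]
  have h1: "int n = int d + int r" using ndr by simp
  have h2: "int d = 0 \<Longrightarrow> int x \<ge> 8*(int n - 1)" using F0 n4 by (simp add: of_nat_diff)
  have h3: "int d \<ge> 1 \<Longrightarrow> int x = int d*(int d - 1) + 4*int d*int r + 4*int S"
    using F1 by (simp add: of_nat_diff)
  have h4: "2*(int k - int d) \<le> int S" using F2 by (cases "k \<le> d") (auto simp: of_nat_diff)
  have h5: "int n < 2*(int k + 1)" if "int k + 1 \<le> int d"
  proof -
    have "k + 1 \<le> d" using that by simp
    then have "n < 2*(k+1)" by (rule F3)
    then show ?thesis by simp
  qed
  have h6: "2 \<le> int k" "2 * int k \<le> int n" using assms(5) k2n by simp_all
  note AM' = AM[OF of_nat_0_le_iff of_nat_0_le_iff of_nat_0_le_iff h1 h6 h2 h3 h4 h5]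
  show ?thesis
  proof (cases "4 \<le> n \<and> n \<le> 6 \<and> k = n div 2")
    case True
    have R: "int x \<ge> int n*(int n - 1) \<and> (int x = int n*(int n - 1) \<longrightarrow> int d = int n)"
    proof -
      have "4 \<le> int n \<and> int n \<le> 6 \<and> 2 * int k + 1 \<ge> int n" using True cond by blast
      then show ?thesis using AM'(1) by blast
    qed
    have nn: "int n*(int n - 1) = int (n*(n-1))" using n4 by (simp add: of_nat_diff)
    have ge: "x \<ge> n*(n-1)" using R nn by linarith
    have eqd: "x = n*(n-1) \<Longrightarrow> d = n" using R nn by simp
    have c2: "2 * (n choose 2) = n*(n-1)" by (rule two_choose)
    have "sigma2 V E \<ge> n choose 2" using ge c2 by (simp add: x_def)
    moreover have "sigma2 V E = n choose 2 \<longleftrightarrow> graph_iso V E {0..<n} (complete_adj n)"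
    proof
      assume "sigma2 V E = n choose 2"
      then have "x = n*(n-1)" using c2 by (simp add: x_def)
      then have "d = n" by (rule eqd)
      then have "Dm = V" using card_subset_eq[OF finV DV] assms(3) by (simp add: d_def)
      then show "graph_iso V E {0..<n} (complete_adj n)" by (rule complete_from[OF _ assms(3)])
    next
      assume "graph_iso V E {0..<n} (complete_adj n)"
      then have DVe: "Dm = V" by (rule complete_conv)
      then have "Rm = {}" by (simp add: Rm_def)
      then have "r = 0" "S = 0" by (simp_all add: r_def S_def)
      moreover have "d = n" using DVe assms(3) by (simp add: d_def)
      ultimately have "x = n*(n-1)" using F1 n4 by simp
      then show "sigma2 V E = n choose 2" using c2 by (simp add: x_def)
    qed
    ultimately show ?thesis using True by simp
  next
    case False
    have R: "int x \<ge> 2*(2*int n+4*int k-6) \<and> (int x = 2*(2*int n+4*int k-6) \<longrightarrow> int d = 1 \<and> int S = 2*(int k-1))"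
    proof -
      have "\<not> (4 \<le> int n \<and> int n \<le> 6 \<and> 2 * int k + 1 \<ge> int n)" using False cond by blast
      then show ?thesis using AM'(2) by blast
    qed
    have bb: "2*(2*int n+4*int k-6) = int (2*(2*n+4*k-6))"
    proof -
      have "6 \<le> 2*n+4*k" using assms(5) by simp
      then have "int (2*n+4*k-6) = int (2*n+4*k) - int 6" by (rule of_nat_diff)
      then show ?thesis by simp
    qed
    have ge: "x \<ge> 2*(2*n+4*k-6)"
    proof -
      have "2*(2*int n+4*int k-6) \<le> int x" using R by blast
      then have "int (2*(2*n+4*k-6)) \<le> int x" by (simp only: bb)
      then show ?thesis by (simp only: of_nat_le_iff)
    qed
    have eqd: "d = 1 \<and> S = 2*(k-1)" if "x = 2*(2*n+4*k-6)"
    proof -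
      have "int x = 2*(2*int n+4*int k-6)" using that by (simp only: bb)
      then have d1: "int d = 1" and s1: "int S = 2*(int k-1)" using R by blast+
      have "int (2*(k-1)) = 2*(int k - 1)" using assms(5) by (simp add: of_nat_diff)
      then have "int S = int (2*(k-1))" using s1 by simp
      then show ?thesis using d1 by (simp only: of_nat_eq_iff) simp
    qed
    have "sigma2 V E \<ge> 2*n + 4*k - 6" using ge by (simp add: x_def)
    moreover have "sigma2 V E = 2*n + 4*k - 6 \<longleftrightarrow> graph_iso V E {0..<n} (join_adj n k)"
    proof
      assume "sigma2 V E = 2*n + 4*k - 6"
      then have "d = 1 \<and> S = 2*(k-1)" using eqd by (simp add: x_def)
      then have D1: "card Dm = 1" and S1: "(\<Sum>u\<in>Rm. card (Nb u \<inter> Rm)) = 2*(k-1)"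
        by (simp_all add: d_def S_def)
      have k1: "k \<ge> 1" using assms(5) by simp
      note js = join_structure[OF M(1) M(2) D1 k1 S1]
      obtain c where "Dm = {c}" using D1 by (meson card_1_singletonE)
      then show "graph_iso V E {0..<n} (join_adj n k)"
        using join_iso[OF _ M(1) js(1) js(2) assms(3) assms(5) k2n] by blast
    next
      assume iso: "graph_iso V E {0..<n} (join_adj n k)"
      have "card Dm = 1" "(\<Sum>u\<in>Rm. card (Nb u \<inter> Rm)) = 2*(k-1)"
        using join_conv[OF iso assms(3) assms(5) k2n] by simp_all
      then have "d = 1" "S = 2*(k-1)" by (simp_all add: d_def S_def)
      moreover have "r = n - 1" using ndr \<open>d = 1\<close> by simp
      ultimately have "x = 4*(n-1) + 8*(k-1)" using F1 by simp
      then show "sigma2 V E = 2*n + 4*k - 6" using n4 assms(5) by (simp add: x_def)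
    qed
    ultimately show ?thesis unfolding if_not_P[OF False] by blast
  qed
qed

end
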